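(* Let $(R,d)$ be a fusion algebra whose set $I$ of irreducible objects is infinite, and let $X\subseteq I$ be a finite generating set. Then the limits $\lim_{n\to\infty}\sqrt[n]{|B_X(n)|}$ and $\lim_{n\to\infty}\sqrt[n]{|S_X(n)|}$ exist and belong to $[1,\infty)$.
   Context: A fusion algebra $(R,d)$ consists of a set $I$ with distinguished $e$ and involution $\alpha\mapsto\bar\alpha$, a unital ring structure on $R=\mathbb{Z}[I]$ with unit $e$ and $\xi\eta=\sum_\alpha N^\alpha_{\xi,\eta}\alpha$, $N^\alpha_{\xi,\eta}\in\mathbb{Z}_{\ge0}$ finitely many nonzero, the involution extending to a $\mathbb{Z}$-linear antimultiplicative involution, Frobenius reciprocity $N^\alpha_{\xi,\eta}=N^\xi_{\alpha,\bar\eta}=N^\eta_{\bar\xi,\alpha}$, and $\mathbb{Z}$-linear multiplicative $d:R\to\mathbb{R}$ with $d(\bar\alpha)=d(\alpha)\ge1$ on $I$. Write $\alpha\subseteq r$ if $\alpha$ has nonzero coefficient in $r$. $|A|=\sum_{\alpha\in A}d(\alpha)^2$. A finite generating set is a finite $X\subseteq I$ with $\bar X=X$ such that every $\alpha\in I$ satisfies $\alpha\subseteq x_1\cdots x_n$ for some $x_i\in X$. $\ell_X(e)=0$, otherwise $\ell_X(\alpha)=\min\{n\ge1:\exists x_1,\dots,x_n\in X,\ \alpha\subseteq x_1\cdots x_n\}$; $B_X(n)=\{\alpha:\ell_X(\alpha)\le n\}$, $S_X(n)=\{\alpha:\ell_X(\alpha)=n\}$. *)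

theory Defs
  imports "HOL-Analysis.Analysis"
begin

text \<open>A fusion algebra is encoded by its basis I (irreducible objects), the unit e,
the involution bar, the fusion coefficients N a x y = N^a_{x,y}, i.e.
x * y = sum_a N a x y * a, and the dimension function d on basis elements
(d on R = Z[I] is its Z-linear extension).\<close>

definition supp :: "'i set \<Rightarrow> ('i \<Rightarrow> 'i \<Rightarrow> 'i \<Rightarrow> nat) \<Rightarrow> 'i \<Rightarrow> 'i \<Rightarrow> 'i set" where
  "supp I N x y = {a \<in> I. N a x y \<noteq> 0}"

locale fusion_algebra =
  fixes I :: "'i set" and e :: 'i and bar :: "'i \<Rightarrow> 'i"
    and N :: "'i \<Rightarrow> 'i \<Rightarrow> 'i \<Rightarrow> nat" and d :: "'i \<Rightarrow> real"
  assumes e_in: "e \<in> I"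
    and bar_in: "\<And>a. a \<in> I \<Longrightarrow> bar a \<in> I"
    and bar_bar: "\<And>a. a \<in> I \<Longrightarrow> bar (bar a) = a"
    and N_zero_outside: "\<And>a x y. x \<in> I \<Longrightarrow> y \<in> I \<Longrightarrow> a \<notin> I \<Longrightarrow> N a x y = 0"
    and finite_supp: "\<And>x y. x \<in> I \<Longrightarrow> y \<in> I \<Longrightarrow> finite (supp I N x y)"
    and unit_left: "\<And>a x. a \<in> I \<Longrightarrow> x \<in> I \<Longrightarrow> N a e x = (if a = x then 1 else 0)"
    and unit_right: "\<And>a x. a \<in> I \<Longrightarrow> x \<in> I \<Longrightarrow> N a x e = (if a = x then 1 else 0)"
    and assoc: "\<And>x y z b. x \<in> I \<Longrightarrow> y \<in> I \<Longrightarrow> z \<in> I \<Longrightarrow> b \<in> I \<Longrightarrow>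
        (\<Sum>a\<in>supp I N x y. N a x y * N b a z) = (\<Sum>a\<in>supp I N y z. N a y z * N b x a)"
    and bar_antimult: "\<And>a x y. a \<in> I \<Longrightarrow> x \<in> I \<Longrightarrow> y \<in> I \<Longrightarrow>
        N (bar a) (bar y) (bar x) = N a x y"
    and frobenius: "\<And>a x y. a \<in> I \<Longrightarrow> x \<in> I \<Longrightarrow> y \<in> I \<Longrightarrow>
        N a x y = N x a (bar y) \<and> N a x y = N y (bar x) a"
    and d_mult: "\<And>x y. x \<in> I \<Longrightarrow> y \<in> I \<Longrightarrow>
        d x * d y = (\<Sum>a\<in>supp I N x y. real (N a x y) * d a)"
    and d_bar: "\<And>a. a \<in> I \<Longrightarrow> d (bar a) = d a"
    and d_ge1: "\<And>a. a \<in> I \<Longrightarrow> d a \<ge> 1"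

text \<open>Coefficients of the product x1 * ... * xn (empty product = e), computed left to right:
 prodcoef (xs @ [x]) a = sum_b prodcoef xs b * N a b x.\<close>
definition prodcoef :: "'i set \<Rightarrow> 'i \<Rightarrow> ('i \<Rightarrow> 'i \<Rightarrow> 'i \<Rightarrow> nat) \<Rightarrow> 'i list \<Rightarrow> 'i \<Rightarrow> nat" where
  "prodcoef I e N xs = foldl (\<lambda>c x. (\<lambda>a. \<Sum>b\<in>{b \<in> I. c b \<noteq> 0}. c b * N a b x))
      (\<lambda>a. if a = e then 1 else 0) xs"

definition contained :: "'i set \<Rightarrow> 'i \<Rightarrow> ('i \<Rightarrow> 'i \<Rightarrow> 'i \<Rightarrow> nat) \<Rightarrow> 'i \<Rightarrow> 'i list \<Rightarrow> bool" where
  "contained I e N a xs \<longleftrightarrow> prodcoef I e N xs a \<noteq> 0"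

definition finite_generating_set ::
  "'i set \<Rightarrow> 'i \<Rightarrow> ('i \<Rightarrow> 'i) \<Rightarrow> ('i \<Rightarrow> 'i \<Rightarrow> 'i \<Rightarrow> nat) \<Rightarrow> 'i set \<Rightarrow> bool" where
  "finite_generating_set I e bar N X \<longleftrightarrow> finite X \<and> X \<subseteq> I \<and> bar ` X = X \<and>
     (\<forall>a\<in>I. \<exists>xs. xs \<noteq> [] \<and> set xs \<subseteq> X \<and> contained I e N a xs)"

definition word_length :: "'i set \<Rightarrow> 'i \<Rightarrow> ('i \<Rightarrow> 'i \<Rightarrow> 'i \<Rightarrow> nat) \<Rightarrow> 'i set \<Rightarrow> 'i \<Rightarrow> nat" where
  "word_length I e N X a = (if a = e then 0 else
     (LEAST n. n \<ge> 1 \<and> (\<exists>xs. length xs = n \<and> set xs \<subseteq> X \<and> contained I e N a xs)))"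

definition ball_X :: "'i set \<Rightarrow> 'i \<Rightarrow> ('i \<Rightarrow> 'i \<Rightarrow> 'i \<Rightarrow> nat) \<Rightarrow> 'i set \<Rightarrow> nat \<Rightarrow> 'i set" where
  "ball_X I e N X n = {a \<in> I. word_length I e N X a \<le> n}"

definition sphere_X :: "'i set \<Rightarrow> 'i \<Rightarrow> ('i \<Rightarrow> 'i \<Rightarrow> 'i \<Rightarrow> nat) \<Rightarrow> 'i set \<Rightarrow> nat \<Rightarrow> 'i set" where
  "sphere_X I e N X n = {a \<in> I. word_length I e N X a = n}"

text \<open>|A| = sum of d(a)^2\<close>
definition dimsize :: "('i \<Rightarrow> real) \<Rightarrow> 'i set \<Rightarrow> real" where
  "dimsize d A = (\<Sum>a\<in>A. (d a)^2)"

end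

theory Submission
  imports Defs
begin

lemma subadd_iter:
  fixes a :: "nat \<Rightarrow> real"
  assumes sub: "\<And>m k. a (m + k) \<le> a m + a k"
  shows "a (q * k + r) \<le> real q * a k + a r"
proof (induction q)
  case 0 then show ?case by simp
next
  case (Suc q)
  have "a (Suc q * k + r) = a (k + (q * k + r))" by (simp add: algebra_simps)
  also have "\<dots> \<le> a k + a (q * k + r)" by (rule sub)
  also have "\<dots> \<le> a k + (real q * a k + a r)" using Suc by simp
  finally show ?case by (simp add: algebra_simps)
qed

lemma fekete:
  fixes a :: "nat \<Rightarrow> real"
  assumes nn: "\<And>n. a n \<ge> 0" and sub: "\<And>m k. a (m + k) \<le> a m + a k"
  shows "\<exists>L\<ge>0. (\<lambda>n. a n / real n) \<longlonglongrightarrow> L"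
proof -
  define S where "S = (\<lambda>n. a n / real n) ` {1..}"
  define L where "L = Inf S"
  have Sne: "S \<noteq> {}" unfolding S_def by auto
  have Sbdd: "bdd_below S" unfolding S_def
    by (rule bdd_belowI[of _ 0]) (auto intro: divide_nonneg_nonneg nn)
  have L0: "L \<ge> 0" unfolding L_def
    by (rule cInf_greatest[OF Sne]) (auto simp: S_def intro: divide_nonneg_nonneg nn)
  have Llow: "L \<le> a n / real n" if "n \<ge> 1" for n
    unfolding L_def by (rule cInf_lower[OF _ Sbdd]) (use that in \<open>auto simp: S_def\<close>)
  have "(\<lambda>n. a n / real n) \<longlonglongrightarrow> L"
  proof (rule LIMSEQ_I)
    fix r :: real assume r: "r > 0"
    have "Inf S < L + r/2" using r L_def by simp
    then obtain k where k1: "k \<ge> 1" and kl: "a k / real k < L + r/2"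
      using cInf_less_iff[OF Sne Sbdd] by (auto simp: S_def)
    define M where "M = (\<Sum>i<k. a i)"
    have M0: "M \<ge> 0" unfolding M_def by (intro sum_nonneg nn)
    obtain N :: nat where N: "real N > 2 * M / r" using reals_Archimedean2 by blast
    show "\<exists>no. \<forall>n\<ge>no. norm (a n / real n - L) < r"
    proof (intro exI[of _ "Suc N"] allI impI)
      fix n assume n: "n \<ge> Suc N"
      have npos: "real n > 0" using n by simp
      have "a n = a ((n div k) * k + n mod k)" by simp
      also have "\<dots> \<le> real (n div k) * a k + a (n mod k)" by (rule subadd_iter[OF sub])
      also have "a (n mod k) \<le> M" unfolding M_def
        using k1 by (intro member_le_sum) (auto intro: nn)
      finally have an: "a n \<le> real (n div k) * a k + M" by simp
      have "real (n div k) * real k \<le> real n"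
        by (metis div_times_less_eq_dividend of_nat_le_iff of_nat_mult)
      then have h2: "real (n div k) * real k * a k \<le> real n * a k"
        using nn[of k] by (rule mult_right_mono)
      have "real (n div k) * a k = (real (n div k) * real k * a k) / real k" using k1 by simp
      also have "\<dots> \<le> (real n * a k) / real k" using h2 k1 by (intro divide_right_mono) auto
      finally have "real (n div k) * a k \<le> real n * (a k / real k)" by simp
      then have "a n \<le> real n * (a k / real k) + M" using an by simp
      then have "a n / real n \<le> a k / real k + M / real n"
        using npos by (simp add: field_simps)
      moreover have "M / real n < r / 2"
      proof -
        have "2 * M / r < real n" using N n by simp
        then have "2 * M < real n * r" using r by (simp add: field_simps)
        then show ?thesis using npos by (simp add: field_simps)
      qed
      moreover have "L \<le> a n / real n" using Llow n by simp
      ultimately show "norm (a n / real n - L) < r" using kl unfolding real_norm_def by linarith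
    qed
  qed
  then show ?thesis using L0 by blast
qed

lemma fekete_root:
  fixes f :: "nat \<Rightarrow> real"
  assumes ge: "\<And>n. f n \<ge> 1" and sub: "\<And>m k. f (m + k) \<le> f m * f k"
  shows "\<exists>L\<ge>1. (\<lambda>n. root n (f n)) \<longlonglongrightarrow> L"
proof -
  define a where "a n = ln (f n)" for n
  have pos: "f n > 0" for n using ge[of n] by simp
  have "\<exists>L\<ge>0. (\<lambda>n. a n / real n) \<longlonglongrightarrow> L"
  proof (rule fekete)
    show "a n \<ge> 0" for n unfolding a_def using ge[of n] by simp
    show "a (m + k) \<le> a m + a k" for m k
      unfolding a_def using sub[of m k] pos[of m] pos[of k] pos[of "m+k"]
      using ln_mult[of "f m" "f k"] ln_le_cancel_iff[of "f (m+k)" "f m * f k"] by simp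
  qed
  then obtain L where L0: "L \<ge> 0" and lim: "(\<lambda>n. a n / real n) \<longlonglongrightarrow> L" by blast
  have "(\<lambda>n. exp (a n / real n)) \<longlonglongrightarrow> exp L" by (intro tendsto_exp lim)
  moreover have "\<forall>\<^sub>F n in sequentially. exp (a n / real n) = root n (f n)"
    using eventually_ge_at_top[of 1]
  proof (rule eventually_mono)
    fix n :: nat assume "n \<ge> 1"
    then show "exp (a n / real n) = root n (f n)"
      using pos[of n] by (simp add: root_powr_inverse powr_def a_def)
  qed
  ultimately have "(\<lambda>n. root n (f n)) \<longlonglongrightarrow> exp L" by (rule Lim_transform_eventually)
  moreover have "exp L \<ge> 1" using L0 by simp
  ultimately show ?thesis by blast
qed


context fusion_algebra begin

definition W :: "'i list \<Rightarrow> 'i set" where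
  "W xs = foldl (\<lambda>S x. \<Union>b\<in>S. supp I N b x) {e} xs"

lemma W_Nil[simp]: "W [] = {e}" by (simp add: W_def)
lemma W_snoc[simp]: "W (xs @ [x]) = (\<Union>b\<in>W xs. supp I N b x)" by (simp add: W_def)

lemma supp_sub: "supp I N x y \<subseteq> I" by (auto simp: supp_def)

lemma W_sub: "set xs \<subseteq> I \<Longrightarrow> W xs \<subseteq> I \<and> finite (W xs)"
proof (induction xs rule: rev_induct)
  case Nil then show ?case using e_in by simp
next
  case (snoc x xs)
  then have "W xs \<subseteq> I" "finite (W xs)" "x \<in> I" by auto
  then show ?case using supp_sub finite_supp by auto
qed

lemma prodcoef_W: "set xs \<subseteq> I \<Longrightarrow> (prodcoef I e N xs a \<noteq> 0) \<longleftrightarrow> a \<in> W xs"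
proof (induction xs arbitrary: a rule: rev_induct)
  case Nil then show ?case by (simp add: prodcoef_def)
next
  case (snoc x xs)
  have xI: "x \<in> I" and xsI: "set xs \<subseteq> I" using snoc.prems by auto
  have WI: "W xs \<subseteq> I" and Wf: "finite (W xs)" using W_sub[OF xsI] by auto
  have eq: "{b \<in> I. prodcoef I e N xs b \<noteq> 0} = W xs" using snoc.IH[OF xsI] WI by auto
  have pc: "prodcoef I e N (xs @ [x]) a = (\<Sum>b\<in>{b \<in> I. prodcoef I e N xs b \<noteq> 0}. prodcoef I e N xs b * N a b x)"
    by (simp add: prodcoef_def)
  have "prodcoef I e N (xs @ [x]) a \<noteq> 0 \<longleftrightarrow> (\<exists>b\<in>W xs. prodcoef I e N xs b * N a b x \<noteq> 0)"
    unfolding pc eq using Wf by simp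
  also have "\<dots> \<longleftrightarrow> (\<exists>b\<in>W xs. N a b x \<noteq> 0)" using snoc.IH[OF xsI] by auto
  also have "\<dots> \<longleftrightarrow> a \<in> W (xs @ [x])"
    using WI xI N_zero_outside by (auto simp: supp_def) (metis N_zero_outside gr_implies_not0 subsetD)
  finally show ?case .
qed

lemma supp_e_right: "b \<in> I \<Longrightarrow> supp I N b e = {b}"
  using unit_right e_in by (auto simp: supp_def split: if_splits)

lemma sum_nat_ne0: "finite A \<Longrightarrow> ((\<Sum>a\<in>A. f a :: nat) \<noteq> 0) \<longleftrightarrow> (\<exists>a\<in>A. f a \<noteq> 0)"
  by simp

lemma assoc_supp:
  assumes "b \<in> I" "g \<in> I" "x \<in> I"
  shows "(\<Union>c\<in>supp I N b g. supp I N c x) = (\<Union>c\<in>supp I N g x. supp I N b c)"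
proof (rule set_eqI)
  fix a
  show "a \<in> (\<Union>c\<in>supp I N b g. supp I N c x) \<longleftrightarrow> a \<in> (\<Union>c\<in>supp I N g x. supp I N b c)"
  proof (cases "a \<in> I")
    case False then show ?thesis using supp_sub by blast
  next
    case True
    have A: "(\<Sum>c\<in>supp I N b g. N c b g * N a c x) = (\<Sum>c\<in>supp I N g x. N c g x * N a b c)"
      using assoc[OF assms True] .
    have "a \<in> (\<Union>c\<in>supp I N b g. supp I N c x) \<longleftrightarrow> (\<Sum>c\<in>supp I N b g. N c b g * N a c x) \<noteq> 0"
      using finite_supp[OF assms(1,2)] True by (auto simp: supp_def)
    also have "\<dots> \<longleftrightarrow> (\<Sum>c\<in>supp I N g x. N c g x * N a b c) \<noteq> 0" using A by simp
    also have "\<dots> \<longleftrightarrow> a \<in> (\<Union>c\<in>supp I N g x. supp I N b c)"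
      using finite_supp[OF assms(2,3)] True by (auto simp: supp_def)
    finally show ?thesis .
  qed
qed

lemma W_append: "set u \<subseteq> I \<Longrightarrow> set v \<subseteq> I \<Longrightarrow> W (u @ v) = (\<Union>b\<in>W u. \<Union>g\<in>W v. supp I N b g)"
proof (induction v rule: rev_induct)
  case Nil
  then show ?case using W_sub[of u] supp_e_right by auto
next
  case (snoc x v)
  have xI: "x \<in> I" and vI: "set v \<subseteq> I" using snoc.prems by auto
  have uI: "W u \<subseteq> I" using W_sub snoc.prems by auto
  have vI': "W v \<subseteq> I" using W_sub vI by auto
  have "W (u @ v @ [x]) = (\<Union>c\<in>W (u @ v). supp I N c x)" using W_snoc[of "u @ v" x] by simp
  also have "\<dots> = (\<Union>b\<in>W u. \<Union>g\<in>W v. \<Union>c\<in>supp I N b g. supp I N c x)"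
    using snoc.IH[OF snoc.prems(1) vI] by auto
  also have "\<dots> = (\<Union>b\<in>W u. \<Union>g\<in>W v. \<Union>c\<in>supp I N g x. supp I N b c)"
  proof (rule SUP_cong[OF refl], rule SUP_cong[OF refl])
    fix b g assume "b \<in> W u" "g \<in> W v"
    then show "(\<Union>c\<in>supp I N b g. supp I N c x) = (\<Union>c\<in>supp I N g x. supp I N b c)"
      using assoc_supp uI vI' xI by blast
  qed
  also have "\<dots> = (\<Union>b\<in>W u. \<Union>g\<in>W (v @ [x]). supp I N b g)" by auto
  finally show ?case by simp
qed

lemma d_pos: "a \<in> I \<Longrightarrow> d a > 0" using d_ge1[of a] by simp

lemma dimsize_supp:
  assumes b: "b \<in> I" and g: "g \<in> I"
  shows "dimsize d (supp I N b g) \<le> (d b)^2 * (d g)^2"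
proof -
  have fin: "finite (supp I N b g)" using finite_supp b g .
  have dle: "d a \<le> d b * d g" if a: "a \<in> supp I N b g" for a
  proof -
    have aI: "a \<in> I" and N1: "N a b g \<ge> 1" using a by (auto simp: supp_def)
    have "d a \<le> real (N a b g) * d a" using N1 d_pos[OF aI] by simp
    also have "\<dots> \<le> (\<Sum>c\<in>supp I N b g. real (N c b g) * d c)"
    proof (rule member_le_sum[OF _ _ fin])
      show "a \<in> supp I N b g" by fact
      fix c assume "c \<in> supp I N b g - {a}"
      then have "c \<in> I" by (auto simp: supp_def)
      then show "0 \<le> real (N c b g) * d c" using d_ge1[of c] by simp
    qed
    finally show ?thesis using d_mult[OF b g] by simp
  qed
  have "dimsize d (supp I N b g) = (\<Sum>a\<in>supp I N b g. d a * d a)"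
    by (simp add: dimsize_def power2_eq_square)
  also have "\<dots> \<le> (\<Sum>a\<in>supp I N b g. real (N a b g) * d a * (d b * d g))"
  proof (rule sum_mono)
    fix a assume a: "a \<in> supp I N b g"
    have aI: "a \<in> I" and N1: "N a b g \<ge> 1" using a by (auto simp: supp_def)
    have "d a * d a \<le> d a * (d b * d g)" using dle[OF a] d_pos[OF aI] by simp
    also have "\<dots> \<le> real (N a b g) * d a * (d b * d g)"
      using N1 d_pos[OF aI] d_pos[OF b] d_pos[OF g] by (intro mult_right_mono) auto
    finally show "d a * d a \<le> real (N a b g) * d a * (d b * d g)" .
  qed
  also have "\<dots> = (\<Sum>a\<in>supp I N b g. real (N a b g) * d a) * (d b * d g)"
    by (simp add: sum_distrib_right)
  also have "\<dots> = (d b)^2 * (d g)^2" unfolding d_mult[OF b g, symmetric] by (simp add: power2_eq_square)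
  finally show ?thesis .
qed

end

lemma sum_UN_le_nonneg:
  fixes f :: "'a \<Rightarrow> real"
  assumes "finite A" "\<And>x. x \<in> A \<Longrightarrow> finite (B x)" "\<And>y. f y \<ge> 0"
  shows "sum f (\<Union>x\<in>A. B x) \<le> (\<Sum>x\<in>A. sum f (B x))"
  using assms
proof (induction A rule: finite_induct)
  case empty then show ?case by simp
next
  case (insert x A)
  have fU: "finite (\<Union>x\<in>A. B x)" using insert by auto
  have fB: "finite (B x)" using insert by auto
  have "sum f (\<Union>y\<in>insert x A. B y) = sum f (B x \<union> (\<Union>y\<in>A. B y))" by simp
  also have "\<dots> \<le> sum f (B x) + sum f (\<Union>y\<in>A. B y)"
    using sum_Un[OF fB fU, of f] sum_nonneg[of "B x \<inter> (\<Union>y\<in>A. B y)" f] insert.prems by simp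
  also have "\<dots> \<le> sum f (B x) + (\<Sum>y\<in>A. sum f (B y))" using insert by simp
  finally show ?case using insert by simp
qed


locale fgs = fusion_algebra I e bar N d for I :: "'i set" and e bar N d +
  fixes X :: "'i set"
  assumes fgs: "finite_generating_set I e bar N X"
begin

lemma XI: "X \<subseteq> I" and Xfin: "finite X" using fgs by (auto simp: finite_generating_set_def)

definition P :: "'i \<Rightarrow> nat \<Rightarrow> bool" where
  "P a n \<longleftrightarrow> (\<exists>xs. length xs = n \<and> set xs \<subseteq> X \<and> a \<in> W xs)"

abbreviation len where "len a \<equiv> word_length I e N X a"

lemma contained_W: "set xs \<subseteq> X \<Longrightarrow> contained I e N a xs \<longleftrightarrow> a \<in> W xs"
  unfolding contained_def using prodcoef_W XI by blast

lemma P_ex: "a \<in> I \<Longrightarrow> \<exists>n. P a n"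
  using fgs contained_W unfolding finite_generating_set_def P_def by blast

lemma len_eq: assumes "a \<in> I" shows "len a = (LEAST n. P a n)"
proof (cases "a = e")
  case True
  have "P e 0" unfolding P_def by (intro exI[of _ "[]"]) simp
  then show ?thesis using True by (simp add: word_length_def)
next
  case False
  have "(\<lambda>n. n \<ge> 1 \<and> (\<exists>xs. length xs = n \<and> set xs \<subseteq> X \<and> contained I e N a xs)) = P a"
  proof
    fix n
    show "(n \<ge> 1 \<and> (\<exists>xs. length xs = n \<and> set xs \<subseteq> X \<and> contained I e N a xs)) = P a n"
      unfolding P_def using contained_W False by (cases n) auto
  qed
  then show ?thesis using False by (simp add: word_length_def)
qed

lemma len_P: "a \<in> I \<Longrightarrow> P a (len a)"
  using len_eq P_ex LeastI_ex by metis

lemma len_le: "a \<in> I \<Longrightarrow> P a n \<Longrightarrow> len a \<le> n"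
  using len_eq Least_le by metis

lemma decomp_le:
  assumes a: "a \<in> I" and l: "len a \<le> m + k"
  shows "\<exists>b g. b \<in> I \<and> g \<in> I \<and> len b \<le> m \<and> len g \<le> k \<and> a \<in> supp I N b g"
proof -
  obtain xs where xs: "length xs = len a" "set xs \<subseteq> X" "a \<in> W xs"
    using len_P[OF a] unfolding P_def by blast
  define u v where "u = take m xs" and "v = drop m xs"
  have uX: "set u \<subseteq> X" and vX: "set v \<subseteq> X" using xs(2) set_take_subset set_drop_subset
    unfolding u_def v_def by fast+
  have "a \<in> W (u @ v)" using xs(3) unfolding u_def v_def by simp
  then obtain b g where b: "b \<in> W u" and g: "g \<in> W v" and abg: "a \<in> supp I N b g"
    using W_append uX vX XI by blast
  have bI: "b \<in> I" and gI: "g \<in> I" using b g W_sub uX vX XI by blast+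
  have "len b \<le> length u" using len_le[OF bI] b uX unfolding P_def by blast
  moreover have "len g \<le> length v" using len_le[OF gI] g vX unfolding P_def by blast
  moreover have "length u \<le> m" "length v \<le> k" using xs(1) l unfolding u_def v_def by auto
  ultimately show ?thesis using bI gI abg by force
qed

lemma len_supp:
  assumes b: "b \<in> I" and g: "g \<in> I" and abg: "a \<in> supp I N b g"
  shows "len a \<le> len b + len g"
proof -
  obtain u where u: "length u = len b" "set u \<subseteq> X" "b \<in> W u" using len_P[OF b] unfolding P_def by blast
  obtain v where v: "length v = len g" "set v \<subseteq> X" "g \<in> W v" using len_P[OF g] unfolding P_def by blast
  have "a \<in> W (u @ v)" using W_append u v XI abg by blast
  moreover have aI: "a \<in> I" using abg by (auto simp: supp_def)
  ultimately have "P a (len b + len g)" unfolding P_def using u v by (intro exI[of _ "u @ v"]) auto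
  then show ?thesis using len_le aI by blast
qed

lemma decomp_eq:
  assumes a: "a \<in> I" and l: "len a = m + k"
  shows "\<exists>b g. b \<in> I \<and> g \<in> I \<and> len b = m \<and> len g = k \<and> a \<in> supp I N b g"
proof -
  obtain b g where *: "b \<in> I" "g \<in> I" "len b \<le> m" "len g \<le> k" "a \<in> supp I N b g"
    using decomp_le[OF a, of m k] l by auto
  have "len a \<le> len b + len g" using len_supp * by blast
  then show ?thesis using * l by (intro exI[of _ b] exI[of _ g]) auto
qed

lemma ball_finite: "finite (ball_X I e N X n)"
proof -
  have "ball_X I e N X n \<subseteq> \<Union> (W ` {xs. set xs \<subseteq> X \<and> length xs \<le> n})"
  proof
    fix a assume "a \<in> ball_X I e N X n"
    then have aI: "a \<in> I" and "len a \<le> n" by (auto simp: ball_X_def)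
    then show "a \<in> \<Union> (W ` {xs. set xs \<subseteq> X \<and> length xs \<le> n})"
      using len_P[OF aI] unfolding P_def by force
  qed
  moreover have "finite (\<Union> (W ` {xs. set xs \<subseteq> X \<and> length xs \<le> n}))"
    using finite_lists_length_le[OF Xfin] W_sub XI by (intro finite_Union) auto
  ultimately show ?thesis by (rule finite_subset)
qed

lemma sphere_finite: "finite (sphere_X I e N X n)"
  by (rule finite_subset[OF _ ball_finite[of n]]) (auto simp: ball_X_def sphere_X_def)

lemma sphere_ne:
  assumes inf: "infinite I"
  shows "\<exists>b. b \<in> sphere_X I e N X n"
proof -
  have "\<not> I \<subseteq> ball_X I e N X n" using inf ball_finite finite_subset by blast
  then obtain a where aI: "a \<in> I" and "a \<notin> ball_X I e N X n" by blast
  then have "len a > n" by (simp add: ball_X_def)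
  then have "len a = n + (len a - n)" by simp
  then obtain b g where "b \<in> I" "len b = n" using decomp_eq[OF aI] by blast
  then show ?thesis by (auto simp: sphere_X_def)
qed

lemma submult:
  fixes T :: "nat \<Rightarrow> 'i set"
  assumes fin: "\<And>n. finite (T n)" and TI: "\<And>n. T n \<subseteq> I"
    and dec: "\<And>a. a \<in> T (m + k) \<Longrightarrow> \<exists>b\<in>T m. \<exists>g\<in>T k. a \<in> supp I N b g"
  shows "dimsize d (T (m + k)) \<le> dimsize d (T m) * dimsize d (T k)"
proof -
  define U where "U = (\<Union>b\<in>T m. \<Union>g\<in>T k. supp I N b g)"
  have sub: "T (m + k) \<subseteq> U" using dec unfolding U_def by blast
  have finU: "finite U" unfolding U_def using fin TI finite_supp by blast
  have "dimsize d (T (m + k)) \<le> dimsize d U"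
    unfolding dimsize_def by (rule sum_mono2[OF finU sub]) simp
  also have "\<dots> \<le> (\<Sum>b\<in>T m. dimsize d (\<Union>g\<in>T k. supp I N b g))"
    unfolding U_def dimsize_def
  proof (rule sum_UN_le_nonneg)
    fix b assume "b \<in> T m"
    then show "finite (\<Union>g\<in>T k. supp I N b g)" using fin TI finite_supp by blast
  qed (simp_all add: fin)
  also have "\<dots> \<le> (\<Sum>b\<in>T m. \<Sum>g\<in>T k. dimsize d (supp I N b g))"
    unfolding dimsize_def
  proof (rule sum_mono, rule sum_UN_le_nonneg)
    fix b g assume "b \<in> T m" "g \<in> T k"
    then show "finite (supp I N b g)" using TI finite_supp by blast
  qed (simp_all add: fin)
  also have "\<dots> \<le> (\<Sum>b\<in>T m. \<Sum>g\<in>T k. (d b)^2 * (d g)^2)"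
    using TI dimsize_supp by (intro sum_mono) blast
  also have "\<dots> = dimsize d (T m) * dimsize d (T k)"
    unfolding dimsize_def by (simp add: sum_product)
  finally show ?thesis .
qed

lemma dimsize_ge1:
  assumes "finite A" "A \<subseteq> I" "a \<in> A"
  shows "dimsize d A \<ge> 1"
proof -
  have d1: "1 \<le> d a" using d_ge1[of a] assms by blast
  then have "1 * 1 \<le> d a * d a" by (intro mult_mono) auto
  then have "1 \<le> (d a)^2" by (simp add: power2_eq_square)
  also have "\<dots> \<le> dimsize d A" unfolding dimsize_def
    using assms by (intro member_le_sum) auto
  finally show ?thesis .
qed

end


theorem lemma3p8:
  fixes I :: "'i set" and e :: 'i and bar :: "'i \<Rightarrow> 'i"
    and N :: "'i \<Rightarrow> 'i \<Rightarrow> 'i \<Rightarrow> nat" and d :: "'i \<Rightarrow> real" and X :: "'i set"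
  assumes "fusion_algebra I e bar N d"
    and "infinite I"
    and "finite_generating_set I e bar N X"
  shows "(\<exists>L. L \<ge> 1 \<and> (\<lambda>n. root n (dimsize d (ball_X I e N X n))) \<longlonglongrightarrow> L)
       \<and> (\<exists>L. L \<ge> 1 \<and> (\<lambda>n. root n (dimsize d (sphere_X I e N X n))) \<longlonglongrightarrow> L)"
proof -
  interpret F: fgs I e bar N d X using assms(1,3) by (simp add: fgs_def fgs_axioms_def)
  have "\<exists>L\<ge>1. (\<lambda>n. root n (dimsize d (ball_X I e N X n))) \<longlonglongrightarrow> L"
  proof (rule fekete_root)
    fix n
    have "e \<in> ball_X I e N X n" using F.e_in by (simp add: ball_X_def word_length_def)
    then show "dimsize d (ball_X I e N X n) \<ge> 1"
      using F.ball_finite by (intro F.dimsize_ge1) (auto simp: ball_X_def)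
  next
    fix m k
    show "dimsize d (ball_X I e N X (m + k)) \<le> dimsize d (ball_X I e N X m) * dimsize d (ball_X I e N X k)"
    proof (rule F.submult)
      fix a assume "a \<in> ball_X I e N X (m + k)"
      then show "\<exists>b\<in>ball_X I e N X m. \<exists>g\<in>ball_X I e N X k. a \<in> supp I N b g"
        using F.decomp_le[of a m k] by (auto simp: ball_X_def)
    qed (rule F.ball_finite, auto simp: ball_X_def)
  qed
  moreover have "\<exists>L\<ge>1. (\<lambda>n. root n (dimsize d (sphere_X I e N X n))) \<longlonglongrightarrow> L"
  proof (rule fekete_root)
    fix n
    obtain b where "b \<in> sphere_X I e N X n" using F.sphere_ne[OF assms(2)] by blast
    then show "dimsize d (sphere_X I e N X n) \<ge> 1"
      using F.sphere_finite by (intro F.dimsize_ge1) (auto simp: sphere_X_def)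
  next
    fix m k
    show "dimsize d (sphere_X I e N X (m + k)) \<le> dimsize d (sphere_X I e N X m) * dimsize d (sphere_X I e N X k)"
    proof (rule F.submult)
      fix a assume "a \<in> sphere_X I e N X (m + k)"
      then show "\<exists>b\<in>sphere_X I e N X m. \<exists>g\<in>sphere_X I e N X k. a \<in> supp I N b g"
        using F.decomp_eq[of a m k] by (auto simp: sphere_X_def)
    qed (rule F.sphere_finite, auto simp: sphere_X_def)
  qed
  ultimately show ?thesis by blast
qed

end
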